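(* Let $\mathcal{L}$ be a set of points in $\mathrm{PG}(k-1,q)$, identified with one-dimensional vector subspaces (lines through the origin) of $\mathbb{F}_q^k$. Then $\mathcal{L}$ is a strong $(s-1)$-blocking set if and only if the set $B=\bigcup_{\ell\in\mathcal{L}}\ell\subseteq\mathbb{F}_q^k$ is an affine $s$-blocking set.
   Context: $\mathrm{PG}(k-1,q)$ is the projective space whose points, lines, ..., hyperplanes are the $1$-, $2$-, ..., $(k-1)$-dimensional vector subspaces of $\mathbb{F}_q^k$; codimension of a projective subspace equals the codimension of the corresponding vector subspace. For a set $S$ of points, $\langle S\rangle$ is the subspace they span. A strong $t$-blocking set in $\mathrm{PG}(k-1,q)$ is a set of points that meets every codimension-$t$ subspace in a set of points spanning that subspace. An affine $s$-blocking set in $\mathbb{F}_q^k$ is a set of points containing at least one point of every affine subspace (translate of a vector subspace) of dimension $k-s$. *)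

theory Defs
  imports "HOL-Analysis.Analysis"
begin

text \<open>Ambient space: F_q^k is modelled as the type 'a ^ 'n with 'a a finite field
  (q = CARD('a)) and k = CARD('n).\<close>

definition proj_point :: "('a::{finite,field} ^ 'n) set \<Rightarrow> bool" where
  "proj_point l \<longleftrightarrow> vec.subspace l \<and> vec.dim l = 1"

definition codim_subspace :: "nat \<Rightarrow> ('a::{finite,field} ^ 'n) set \<Rightarrow> bool" where
  "codim_subspace t W \<longleftrightarrow> vec.subspace W \<and> t \<le> CARD('n) \<and> vec.dim W = CARD('n) - t"

definition strong_blocking_set :: "nat \<Rightarrow> ('a::{finite,field} ^ 'n) set set \<Rightarrow> bool" where
  "strong_blocking_set t L \<longleftrightarrow>
     (\<forall>W. codim_subspace t W \<longrightarrow> vec.span (\<Union>{l \<in> L. l \<subseteq> W}) = W)"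

definition affine_blocking_set :: "nat \<Rightarrow> ('a::{finite,field} ^ 'n) set \<Rightarrow> bool" where
  "affine_blocking_set s B \<longleftrightarrow>
     (\<forall>(a::'a ^ 'n) V. vec.subspace V \<and> vec.dim V = CARD('n) - s \<longrightarrow>
        (\<exists>v\<in>V. a + v \<in> B))"

end

theory Submission
  imports Defs
begin

lemma pp_span:
  fixes l :: "('a::{finite,field} ^ 'n) set"
  assumes "proj_point l" "y \<in> l" "y \<noteq> 0"
  shows "l = vec.span {y}"
proof -
  have "vec.span {y} = vec.span l"
    using assms by (intro vec.dim_eq_span) (auto simp: proj_point_def)
  then show ?thesis using assms vec.span_eq_iff unfolding proj_point_def by metis
qed

lemma dim_univ_vec: "vec.dim (UNIV :: ('a::{finite,field} ^ 'n) set) = CARD('n)"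
  by (simp add: card_cart_basis)

lemma fwd:
  fixes L :: "('a::{finite,field} ^ 'n) set set"
  assumes s1: "1 \<le> s" and sk: "s \<le> CARD('n)"
    and pp: "\<forall>l\<in>L. proj_point l"
    and sb: "strong_blocking_set (s - 1) L"
    and V: "vec.subspace V" "vec.dim V = CARD('n) - s"
    and aV: "a \<notin> V"
  shows "\<exists>v\<in>V. a + v \<in> \<Union>L"
proof -
  define W where "W = vec.span (insert a V)"
  have spV: "vec.span V = V" using V vec.span_eq_iff by blast
  have aV': "a \<notin> vec.span V" using spV aV by metis
  have dW: "vec.dim W = CARD('n) - (s - 1)"
    unfolding W_def using vec.dim_insert[of a V] aV' V s1 sk by simp
  have cW: "codim_subspace (s - 1) W"
    unfolding codim_subspace_def using dW sk W_def by auto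
  have eq: "vec.span (\<Union>{l \<in> L. l \<subseteq> W}) = W" using sb cW unfolding strong_blocking_set_def by blast
  have "\<exists>l\<in>L. l \<subseteq> W \<and> \<not> l \<subseteq> V"
  proof (rule ccontr)
    assume "\<not> ?thesis"
    then have "\<Union>{l \<in> L. l \<subseteq> W} \<subseteq> V" by blast
    then have "vec.span (\<Union>{l \<in> L. l \<subseteq> W}) \<subseteq> V" using V vec.span_minimal by blast
    moreover have "a \<in> W" unfolding W_def by (simp add: vec.span_base)
    ultimately show False using eq aV by blast
  qed
  then obtain l x where l: "l \<in> L" "l \<subseteq> W" "x \<in> l" "x \<notin> V" by blast
  have "x \<in> W" using l by blast
  then obtain c where c: "x - c *s a \<in> V" unfolding W_def using vec.span_breakdown_eq spV by metis
  have c0: "c \<noteq> 0" using c l(4) by auto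
  have sl: "vec.subspace l" using pp l(1) unfolding proj_point_def by blast
  have "inverse c *s x \<in> l" using sl l(3) by (simp add: vec.subspace_scale)
  moreover have "inverse c *s x = a + inverse c *s (x - c *s a)"
    using c0 by (simp add: vector_ssub_ldistrib scalar_mult_eq_scaleR vec_eq_iff field_simps)
  moreover have "inverse c *s (x - c *s a) \<in> V" using V(1) c vec.subspace_scale by blast
  ultimately have "a + inverse c *s (x - c *s a) \<in> \<Union>L" "inverse c *s (x - c *s a) \<in> V"
    using l(1) by (metis UnionI)+
  then show ?thesis by blast
qed

theorem lemma1p2:
  fixes L :: "('a::{finite,field} ^ 'n) set set"
  assumes "1 \<le> s" and "s \<le> CARD('n)"
    and "\<forall>l\<in>L. proj_point l"
  shows "strong_blocking_set (s - 1) L \<longleftrightarrow> affine_blocking_set s (\<Union>L)"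
proof
  assume sb: "strong_blocking_set (s - 1) L"
  show "affine_blocking_set s (\<Union>L)"
    unfolding affine_blocking_set_def
  proof (intro allI impI)
    fix a :: "'a ^ 'n" and V :: "('a ^ 'n) set"
    assume V: "vec.subspace V \<and> vec.dim V = CARD('n) - s"
    show "\<exists>v\<in>V. a + v \<in> \<Union>L"
    proof (cases "a \<in> V")
      case False
      then show ?thesis by (rule fwd[OF assms sb conjunct1[OF V] conjunct2[OF V]])
    next
      case True
      have "V \<noteq> UNIV"
      proof
        assume "V = UNIV"
        then have "vec.dim V = CARD('n)" using dim_univ_vec by metis
        then show False using V assms(1,2) by linarith
      qed
      then obtain b where b: "b \<notin> V" by blast
      have "\<exists>w\<in>V. b + w \<in> \<Union>L" by (rule fwd[OF assms sb conjunct1[OF V] conjunct2[OF V] b])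
      then obtain w where "w \<in> V" "b + w \<in> \<Union>L" by blast
      then obtain l where l: "l \<in> L" by blast
      then have "0 \<in> l" using assms(3) unfolding proj_point_def using vec.subspace_0 by blast
      moreover have "-a \<in> V" using True V vec.subspace_neg by blast
      moreover have "a + - a = 0" by simp
      ultimately have "a + - a \<in> \<Union>L" using l by (metis UnionI)
      then show ?thesis using \<open>-a \<in> V\<close> by blast
    qed
  qed
next
  assume ab: "affine_blocking_set s (\<Union>L)"
  show "strong_blocking_set (s - 1) L"
    unfolding strong_blocking_set_def
  proof (intro allI impI)
    fix W :: "('a ^ 'n) set"
    assume cW: "codim_subspace (s - 1) W"
    then have sW: "vec.subspace W" and dW: "vec.dim W = CARD('n) - s + 1"
      using assms unfolding codim_subspace_def by auto
    define U where "U = vec.span (\<Union>{l \<in> L. l \<subseteq> W})"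
    have UW: "U \<subseteq> W" unfolding U_def using sW by (intro vec.span_minimal) auto
    show "U = W"
    proof (rule ccontr)
      assume ne: "U \<noteq> W"
      obtain B where B: "B \<subseteq> U" "vec.independent B" "U \<subseteq> vec.span B" "card B = vec.dim U"
        using vec.basis_exists by blast
      obtain C where C: "B \<subseteq> C" "C \<subseteq> W" "vec.independent C" "W \<subseteq> vec.span C"
        using vec.maximal_independent_subset_extend[of B W] B UW by blast
      have fC: "finite C" using C vec.finiteI_independent by blast
      have cC: "card C = vec.dim W" using C vec.basis_card_eq_dim by blast
      have "vec.dim U < vec.dim W"
      proof (rule ccontr)
        assume "\<not> ?thesis"
        then have "vec.span U = vec.span W" using vec.dim_eq_span[OF UW] by simp
        moreover have "vec.subspace U" unfolding U_def by simp
        ultimately show False using sW ne vec.span_eq_iff by metis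
      qed
      then have cB: "card B \<le> CARD('n) - s" using B dW by simp
      have fB: "finite B" using fC C finite_subset by blast
      have "card (C - B) = card C - card B" using fC C by (simp add: card_Diff_subset fB)
      then have "CARD('n) - s - card B \<le> card (C - B)" using cC dW cB by simp
      then obtain E where E: "E \<subseteq> C - B" "card E = CARD('n) - s - card B"
        using obtain_subset_with_card_n by metis
      define D where "D = B \<union> E"
      have fE: "finite E" using E fC finite_subset by blast
      have cD: "card D = CARD('n) - s" unfolding D_def using E fE fB cB
        by (subst card_Un_disjoint) auto
      have DC: "D \<subseteq> C" unfolding D_def using E C by blast
      have "D \<noteq> C" using cD cC dW by auto
      then obtain a where a: "a \<in> C" "a \<notin> D" using DC by blast
      define V where "V = vec.span D"
      have iD: "vec.independent D" using DC C vec.independent_mono by blast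
      have dV: "vec.dim V = CARD('n) - s" unfolding V_def using vec.dim_span_eq_card_independent[OF iD] cD by simp
      have aV: "a \<notin> V"
      proof
        assume "a \<in> V"
        then have "a \<in> vec.span (C - {a})" unfolding V_def using vec.span_mono[of D "C - {a}"] DC a by blast
        then have "vec.dependent C" unfolding vec.dependent_def using a(1) by blast
        then show False using C(3) by blast
      qed
      have sV: "vec.subspace V" unfolding V_def by simp
      have "\<exists>v\<in>V. a + v \<in> \<Union>L"
        by (rule ab[unfolded affine_blocking_set_def, rule_format, of V a, OF conjI[OF sV dV]])
      then obtain v where v: "v \<in> V" "a + v \<in> \<Union>L" by blast
      then obtain l where l: "l \<in> L" "a + v \<in> l" by blast
      have nz: "a + v \<noteq> 0"
      proof
        assume "a + v = 0"
        then have "a = - v" by (simp add: eq_neg_iff_add_eq_0)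
        moreover have "- v \<in> V" using v sV vec.subspace_neg by blast
        ultimately show False using aV by simp
      qed
      have DW: "D \<subseteq> W" using DC C(2) by (rule order_trans)
      have VW: "V \<subseteq> W" unfolding V_def by (rule vec.span_minimal[OF DW sW])
      have "a + v \<in> W" using a C VW v sW vec.subspace_add by blast
      then have "vec.span {a + v} \<subseteq> W" using sW vec.span_minimal by blast
      moreover have "l = vec.span {a + v}"
        by (rule pp_span) (use assms(3) l nz in auto)
      ultimately have lW: "l \<subseteq> W" by simp
      have lU0: "l \<subseteq> \<Union>{l \<in> L. l \<subseteq> W}" using l(1) lW by blast
      have "l \<subseteq> U" unfolding U_def using lU0 vec.span_superset by (rule order_trans)
      moreover have "U \<subseteq> V" unfolding V_def D_def using B(3) vec.span_mono[OF Un_upper1] by (rule order_trans)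
      ultimately have "a + v \<in> V" using l by blast
      then have "(a + v) - v \<in> V" using v sV vec.subspace_diff by blast
      then have "a \<in> V" by simp
      then show False using aV by blast
    qed
  qed
qed

end
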